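(* Let $\Omega_n=\dfrac{\pi^{n/2}}{\Gamma\left(\frac n2+1\right)}$ for $n\in\mathbb{N}_0$. Then \[ \sqrt{\frac{n+\frac12}{2\pi}+\frac1{16\pi n}-\frac1{32\pi n^2}-\frac5{256\pi n^3}}<\frac{\Omega_{n-1}}{\Omega_n} \] for every integer $n\ge1$, and \[ \frac{\Omega_{n-1}}{\Omega_n}<\sqrt{\frac{n+\frac12}{2\pi}+\frac1{16\pi n}-\frac1{32\pi n^2}} \] for every integer $n\ge2$.
   Context: $\Omega_n$ is the volume of the unit ball in $\mathbb{R}^n$ ($\Omega_0=1$); $\Gamma$ is Euler's gamma function. *)

theory Defs
  imports "HOL-Analysis.Analysis"
begin

definition Omega :: "nat \<Rightarrow> real" where
  "Omega n = pi powr (real n / 2) / Gamma (real n / 2 + 1)"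

end

theory Submission imports Defs "HOL-Real_Asymp.Real_Asymp" begin

lemma Gp1: "(z::real) > 0 \<Longrightarrow> Gamma (z + 1) = z * Gamma z"
  by (rule Gamma_plus1) (auto elim!: nonpos_Ints_cases)

lemma lc_mid: assumes "(a::real) > 0" "b > 0"
  shows "Gamma ((a+b)/2)^2 \<le> Gamma a * Gamma b"
proof -
  have "(ln \<circ> Gamma) ((1 - 1/2) *\<^sub>R a + (1/2) *\<^sub>R b) \<le> (1 - 1/2) * (ln \<circ> Gamma) a + (1/2) * (ln \<circ> Gamma) b"
    by (rule convex_onD[OF log_convex_Gamma_real]) (use assms in auto)
  hence "2 * ln (Gamma ((a+b)/2)) \<le> ln (Gamma a) + ln (Gamma b)"
    by (simp add: field_simps)
  moreover have p: "Gamma a > 0" "Gamma b > 0" "Gamma ((a+b)/2) > 0" using assms by auto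
  ultimately have "ln (Gamma ((a+b)/2)^2) \<le> ln (Gamma a * Gamma b)"
    by (simp add: ln_mult ln_realpow)
  thus ?thesis using p by (simp add: ln_le_cancel_iff)
qed

definition ff :: "real \<Rightarrow> real" where
  "ff x = (Gamma (x/2+1) / Gamma (x/2+1/2))^2"

lemma ff_pos: "x > 0 \<Longrightarrow> ff x > 0"
proof -
  assume "x > 0"
  hence "Gamma (x/2+1) > 0" "Gamma (x/2+1/2) > 0" by auto
  thus ?thesis unfolding ff_def by simp
qed

lemma ff_rec: assumes "x > 0" shows "ff (x+2) = ff x * (x+2)^2/(x+1)^2"
proof -
  have a: "Gamma ((x+2)/2+1) = (x/2+1) * Gamma (x/2+1)"
    using Gp1[of "x/2+1"] assms by (simp add: add_divide_distrib)
  have b: "Gamma ((x+2)/2+1/2) = (x/2+1/2) * Gamma (x/2+1/2)"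
  proof -
    have "Gamma ((x+2)/2+1/2) = Gamma ((x/2+1/2) + 1)" by (rule arg_cong[where f=Gamma]) (simp add: field_simps)
    also have "\<dots> = (x/2+1/2) * Gamma (x/2+1/2)" using Gp1[of "x/2+1/2"] assms by simp
    finally show ?thesis .
  qed
  have "x/2+1 = (x+2)/2" "x/2+1/2 = (x+1)/2" by simp_all
  have alg: "\<And>G1 G2::real. G2 \<noteq> 0 \<Longrightarrow> ((x/2+1)*G1/((x/2+1/2)*G2))^2 = (G1/G2)^2 * (x+2)^2/(x+1)^2"
  proof -
    fix G1 G2 :: real assume "G2 \<noteq> 0"
    have "(x/2+1)*G1/((x/2+1/2)*G2) = (2*((x / 2 + 1) * G1)) / (2*((x / 2 + 1 / 2) * G2))"
      by simp
    also have "\<dots> = (x + 2) * G1 / ((x + 1) * G2)" by (simp add: algebra_simps)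
    finally show "((x/2+1)*G1/((x/2+1/2)*G2))^2 = (G1/G2)^2 * (x+2)^2/(x+1)^2"
      by (simp add: power_mult_distrib power_divide mult_ac)
  qed
  have "Gamma (x/2+1/2) \<noteq> 0" using assms by (simp add: order.strict_implies_not_eq[symmetric])
  hence "Gamma (x/2+1/2) \<noteq> 0" using Gamma_real_pos[of "x/2+1/2"] assms by simp
  have "(x+2)/2 + 1 = (x+2)/2 + 1" ..
  show ?thesis unfolding ff_def a b
    using alg[OF \<open>Gamma (x/2+1/2) \<noteq> 0\<close>] by simp
qed

lemma ff_bounds: assumes "x > 0" shows "x/2 \<le> ff x" "ff x \<le> (x+1)/2"
proof -
  define y where "y = x/2"
  have y: "y > 0" using assms y_def by simp
  have g1: "Gamma (y+1) = y * Gamma y" using Gp1 y by simp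
  have g2: "Gamma (y+3/2) = (y+1/2) * Gamma (y+1/2)" using Gp1[of "y+1/2"] y
  proof -
    have "Gamma (y+3/2) = Gamma ((y+1/2)+1)" by (rule arg_cong[where f=Gamma]) (simp add: field_simps)
    also have "\<dots> = (y+1/2) * Gamma (y+1/2)" using Gp1[of "y+1/2"] y by simp
    finally show ?thesis .
  qed
  have u: "Gamma (y+1)^2 \<le> Gamma (y+1/2) * Gamma (y+3/2)"
  proof -
    have e: "((y+1/2)+(y+3/2))/2 = y+1" by simp
    show ?thesis using lc_mid[of "y+1/2" "y+3/2", unfolded e] y by simp
  qed
  have l: "Gamma (y+1/2)^2 \<le> Gamma y * Gamma (y+1)"
  proof -
    have e: "(y+(y+1))/2 = y+1/2" by simp
    show ?thesis using lc_mid[of "y" "y+1", unfolded e] y by simp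
  qed
  have pa: "Gamma (y+1/2) > 0" "Gamma y > 0" "Gamma (y+1) > 0" using y by auto
  have ffy: "ff x = Gamma (y+1)^2 / Gamma (y+1/2)^2" unfolding ff_def y_def by (simp add: power_divide)
  show "ff x \<le> (x+1)/2"
  proof -
    have "Gamma (y+1)^2 \<le> (y+1/2) * Gamma (y+1/2)^2" using u g2 by (simp add: power2_eq_square mult_ac)
    hence "Gamma (y+1)^2 / Gamma (y+1/2)^2 \<le> y+1/2" using pa by (simp add: divide_le_eq)
    thus ?thesis by (simp add: ffy y_def add_divide_distrib)
  qed
  show "x/2 \<le> ff x"
  proof -
    have "y * Gamma (y+1/2)^2 \<le> Gamma (y+1)^2" using l g1 pa y
      by (simp add: power2_eq_square)
    hence "y \<le> Gamma (y+1)^2 / Gamma (y+1/2)^2" using pa by (simp add: le_divide_eq)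
    thus ?thesis by (simp add: ffy y_def add_divide_distrib)
  qed
qed


definition PP :: "real \<Rightarrow> real" where
  "PP m = (m+1/2)/2 + 1/(16*m) - 1/(32*m^2) - 5/(256*m^3)"
definition QQ :: "real \<Rightarrow> real" where
  "QQ m = (m+1/2)/2 + 1/(16*m) - 1/(32*m^2)"

lemma PP_eq: "m > 0 \<Longrightarrow> PP m = (128*m^4+64*m^3+16*m^2-8*m-5)/(256*m^3)"
  unfolding PP_def by (simp add: field_simps power2_eq_square power3_eq_cube power4_eq_xxxx)

lemma QQ_eq: "m > 0 \<Longrightarrow> QQ m = (128*m^4+64*m^3+16*m^2-8*m)/(256*m^3)"
  unfolding QQ_def by (simp add: field_simps power2_eq_square power3_eq_cube power4_eq_xxxx)

lemma PP_pos: assumes "m \<ge> 1" shows "PP m > 0"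
proof -
  have "m^2 \<ge> 1" "m^3 \<ge> 1" "m^4 \<ge> 1" using assms by (simp_all add: one_le_power)
  moreover have "m^4 \<ge> m" using mult_left_mono[OF \<open>m^3 \<ge> 1\<close>, of m] assms
    by (simp add: power_Suc[symmetric] del: power_Suc)
  ultimately have "128*m^4+64*m^3+16*m^2-8*m-5 > 0" using assms by linarith
  thus ?thesis using PP_eq[of m] assms by simp
qed

lemma QQ_pos: assumes "m \<ge> 1" shows "QQ m > 0"
proof -
  have "m^2 \<ge> 1" "m^3 \<ge> 1" "m^4 \<ge> 1" using assms by (simp_all add: one_le_power)
  moreover have "m^4 \<ge> m" using mult_left_mono[OF \<open>m^3 \<ge> 1\<close>, of m] assms
    by (simp add: power_Suc[symmetric] del: power_Suc)
  ultimately have "128*m^4+64*m^3+16*m^2-8*m > 0" using assms by linarith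
  thus ?thesis using QQ_eq[of m] assms by simp
qed

lemma polyP: "(m+1)^2 * m^3 * (128*(m+2)^4+64*(m+2)^3+16*(m+2)^2-8*(m+2)-5) - (m+2)^5 * (128*m^4+64*m^3+16*m^2-8*m-5) = (160+656*m+528*m^2+115*m^3::real)"
  by algebra
lemma polyQ: "(m+2)^5 * (128*m^4+64*m^3+16*m^2-8*m) - (m+1)^2 * m^3 * (128*(m+2)^4+64*(m+2)^3+16*(m+2)^2-8*(m+2)) = (8*m*(m+2)*(5*m^2-16)::real)"
  by algebra
lemma cmp1: assumes "(m::real) > 0" shows "(m+2)^2 * (A/(256*m^3)) < (m+1)^2 * (B/(256*(m+2)^3)) \<longleftrightarrow> (m+2)^5 * A < (m+1)^2 * m^3 * B"
proof -
  have p: "m^3 > 0" "(m+2)^3 > 0" using assms by auto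
  show ?thesis using p by (simp add: divide_simps) (simp add: algebra_simps power_add[symmetric] eval_nat_numeral)
qed
lemma cmp2: assumes "(m::real) > 0" shows "(m+1)^2 * (B/(256*(m+2)^3)) < (m+2)^2 * (A/(256*m^3)) \<longleftrightarrow> (m+1)^2 * m^3 * B < (m+2)^5 * A"
proof -
  have p: "m^3 > 0" "(m+2)^3 > 0" using assms by auto
  show ?thesis using p by (simp add: divide_simps) (simp add: algebra_simps power_add[symmetric] eval_nat_numeral)
qed

lemma PP_step: assumes "m \<ge> 1" shows "(m+2)^2 * PP m < (m+1)^2 * PP (m+2)"
proof -
  have m: "m > 0" "m + 2 > 0" using assms by auto
  have "m^2 > 0" "m^3 > 0" using m by auto
  hence "(160+656*m+528*m^2+115*m^3) > 0" using m by linarith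
  hence "(m+2)^5 * (128*m^4+64*m^3+16*m^2-8*m-5) < (m+1)^2 * m^3 * (128*(m+2)^4+64*(m+2)^3+16*(m+2)^2-8*(m+2)-5)"
    using polyP[of m] by linarith
  thus ?thesis unfolding PP_eq[OF m(1)] PP_eq[OF m(2)] cmp1[OF m(1)] .
qed

lemma QQ_step: assumes "m \<ge> 2" shows "(m+1)^2 * QQ (m+2) < (m+2)^2 * QQ m"
proof -
  have m: "m > 0" "m + 2 > 0" using assms by auto
  have "(2::real)^2 \<le> m^2" using power_mono[OF assms, of 2] by simp
  hence "5*m^2-16 > 0" by simp
  hence "8*m*(m+2)*(5*m^2-16) > 0" using m by simp
  hence "(m+1)^2 * m^3 * (128*(m+2)^4+64*(m+2)^3+16*(m+2)^2-8*(m+2)) < (m+2)^5 * (128*m^4+64*m^3+16*m^2-8*m)"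
    using polyQ[of m] by linarith
  thus ?thesis unfolding QQ_eq[OF m(1)] QQ_eq[OF m(2)] cmp2[OF m(1)] .
qed

lemma lim_PP: "(\<lambda>k. ((real n + 2*real k)/2) / PP (real n + 2*real k)) \<longlonglongrightarrow> 1"
  unfolding PP_def by real_asymp
lemma lim_PP': "(\<lambda>k. ((real n + 2*real k + 1)/2) / PP (real n + 2*real k)) \<longlonglongrightarrow> 1"
  unfolding PP_def by real_asymp
lemma lim_QQ: "(\<lambda>k. ((real n + 2*real k)/2) / QQ (real n + 2*real k)) \<longlonglongrightarrow> 1"
  unfolding QQ_def by real_asymp
lemma lim_QQ': "(\<lambda>k. ((real n + 2*real k + 1)/2) / QQ (real n + 2*real k)) \<longlonglongrightarrow> 1"
  unfolding QQ_def by real_asymp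


lemma omega_ratio: assumes "n \<ge> 1" shows "Omega (n - 1) / Omega n = sqrt (ff (real n) / pi)"
proof -
  define G1 where "G1 = Gamma (real n/2+1)"
  define G2 where "G2 = Gamma (real n/2+1/2)"
  have n: "real n > 0" using assms by simp
  have g: "G1 > 0" "G2 > 0" unfolding G1_def G2_def using n by auto
  have a: "real (n-1)/2 + 1 = real n/2+1/2" using assms by (simp add: of_nat_diff field_simps)
  have b: "pi powr (real n/2) = pi powr (real (n-1)/2) * sqrt pi"
  proof -
    have "real n/2 = real (n-1)/2 + 1/2" using assms by (simp add: of_nat_diff field_simps)
    hence "pi powr (real n/2) = pi powr (real (n-1)/2 + 1/2)" by (rule arg_cong)
    also have "\<dots> = pi powr (real (n-1)/2) * pi powr (1/2)" by (rule powr_add)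
    also have "pi powr (1/2) = sqrt pi" by (rule powr_half_sqrt) simp
    finally show ?thesis .
  qed
  have "Omega (n - 1) / Omega n = G1 / (G2 * sqrt pi)"
    unfolding Omega_def a b G1_def[symmetric] G2_def[symmetric] using g by (simp add: field_simps)
  also have "\<dots> = sqrt (ff (real n) / pi)"
    unfolding ff_def G1_def[symmetric] G2_def[symmetric] using g
    by (simp add: real_sqrt_divide power_divide real_sqrt_mult)
  finally show ?thesis .
qed

lemma main_lower: assumes "n \<ge> 1" shows "PP (real n) < ff (real n)"
proof -
  define t where "t k = ff (real n + 2*real k) / PP (real n + 2*real k)" for k
  have step: "t (Suc k) < t k" for k
  proof -
    define m where "m = real n + 2*real k"
    have m: "m \<ge> 1" using assms m_def by simp
    have e: "real n + 2*real (Suc k) = m + 2" unfolding m_def by simp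
    have pp: "PP m > 0" "PP (m+2) > 0" using PP_pos m by auto
    have fp: "ff m > 0" using ff_pos m by simp
    have "ff m * ((m+2)^2 * PP m) < ff m * ((m+1)^2 * PP (m+2))"
      using PP_step[OF m] fp by simp
    hence "ff m * (m+2)^2/(m+1)^2 / PP (m+2) < ff m / PP m"
      using pp m by (simp add: divide_simps mult_ac)
    thus ?thesis unfolding t_def e m_def[symmetric] ff_rec[of m] using m ff_rec[of m] by simp
  qed
  have lim: "t \<longlonglongrightarrow> 1"
  proof (rule tendsto_sandwich[OF _ _ lim_PP[of n] lim_PP'[of n]])
    show "\<forall>\<^sub>F k in sequentially. (real n + 2 * real k) / 2 / PP (real n + 2 * real k) \<le> t k"
      unfolding t_def using assms ff_bounds(1)
      by (intro always_eventually allI divide_right_mono less_imp_le[OF PP_pos]) auto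
    show "\<forall>\<^sub>F k in sequentially. t k \<le> (real n + 2 * real k + 1) / 2 / PP (real n + 2 * real k)"
      unfolding t_def using assms ff_bounds(2)
      by (intro always_eventually allI divide_right_mono less_imp_le[OF PP_pos]) auto
  qed
  have "decseq t" unfolding decseq_Suc_iff using step less_imp_le by blast
  hence "1 \<le> t 1" using decseq_ge lim by blast
  hence "1 < t 0" using step[of 0] by simp
  thus ?thesis unfolding t_def using PP_pos[of "real n"] assms by (simp add: divide_simps)
qed

lemma main_upper: assumes "n \<ge> 2" shows "ff (real n) < QQ (real n)"
proof -
  define t where "t k = ff (real n + 2*real k) / QQ (real n + 2*real k)" for k
  have step: "t k < t (Suc k)" for k
  proof -
    define m where "m = real n + 2*real k"
    have m: "m \<ge> 2" using assms m_def by simp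
    have e: "real n + 2*real (Suc k) = m + 2" unfolding m_def by simp
    have pp: "QQ m > 0" "QQ (m+2) > 0" using QQ_pos m by auto
    have fp: "ff m > 0" using ff_pos m by simp
    have "ff m * ((m+1)^2 * QQ (m+2)) < ff m * ((m+2)^2 * QQ m)"
      using QQ_step[OF m] fp by simp
    hence "ff m / QQ m < ff m * (m+2)^2/(m+1)^2 / QQ (m+2)"
      using pp m by (simp add: divide_simps mult_ac)
    thus ?thesis unfolding t_def e m_def[symmetric] using m ff_rec[of m] by simp
  qed
  have lim: "t \<longlonglongrightarrow> 1"
  proof (rule tendsto_sandwich[OF _ _ lim_QQ[of n] lim_QQ'[of n]])
    show "\<forall>\<^sub>F k in sequentially. (real n + 2 * real k) / 2 / QQ (real n + 2 * real k) \<le> t k"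
      unfolding t_def using assms ff_bounds(1)
      by (intro always_eventually allI divide_right_mono less_imp_le[OF QQ_pos]) auto
    show "\<forall>\<^sub>F k in sequentially. t k \<le> (real n + 2 * real k + 1) / 2 / QQ (real n + 2 * real k)"
      unfolding t_def using assms ff_bounds(2)
      by (intro always_eventually allI divide_right_mono less_imp_le[OF QQ_pos]) auto
  qed
  have "incseq t" unfolding incseq_Suc_iff using step less_imp_le by blast
  hence "t 1 \<le> 1" using incseq_le lim by blast
  hence "t 0 < 1" using step[of 0] by simp
  thus ?thesis unfolding t_def using QQ_pos[of "real n"] assms by (simp add: divide_simps)
qed

theorem theorem11:
  shows "(\<forall>n::nat. n \<ge> 1 \<longrightarrow>
            sqrt ((real n + 1/2) / (2*pi) + 1 / (16*pi*real n) - 1 / (32*pi*(real n)^2)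
                  - 5 / (256*pi*(real n)^3)) < Omega (n - 1) / Omega n)
       \<and> (\<forall>n::nat. n \<ge> 2 \<longrightarrow>
            Omega (n - 1) / Omega n <
            sqrt ((real n + 1/2) / (2*pi) + 1 / (16*pi*real n) - 1 / (32*pi*(real n)^2)))"
proof safe
  fix n :: nat assume n: "n \<ge> 1"
  have e: "(real n + 1/2) / (2*pi) + 1 / (16*pi*real n) - 1 / (32*pi*(real n)^2)
                  - 5 / (256*pi*(real n)^3) = PP (real n) / pi"
    unfolding PP_def by (simp add: field_simps)
  show "sqrt ((real n + 1/2) / (2*pi) + 1 / (16*pi*real n) - 1 / (32*pi*(real n)^2)
                  - 5 / (256*pi*(real n)^3)) < Omega (n - 1) / Omega n"
    unfolding e omega_ratio[OF n] using main_lower[OF n]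
    by (simp add: divide_strict_right_mono)
next
  fix n :: nat assume n: "n \<ge> 2"
  have e: "(real n + 1/2) / (2*pi) + 1 / (16*pi*real n) - 1 / (32*pi*(real n)^2) = QQ (real n) / pi"
    unfolding QQ_def by (simp add: field_simps)
  have n1: "n \<ge> 1" using n by simp
  show "Omega (n - 1) / Omega n <
            sqrt ((real n + 1/2) / (2*pi) + 1 / (16*pi*real n) - 1 / (32*pi*(real n)^2))"
    unfolding e omega_ratio[OF n1] using main_upper[OF n] n
    by (simp add: divide_strict_right_mono)
qed

end
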